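(* Let $\mathcal{T}:L^2(\mathbb{R})\to L^2(\mathbb{R})$ be a nonzero self-adjoint Hilbert–Schmidt operator, $\mathcal{T} = \sum_{k\in\mathbb{N}}\lambda_k v_kv_k^*$ with $(v_k)$ an orthonormal basis of $L^2(\mathbb{R})$ and real eigenvalues ordered so that $\|\mathcal{T}\| = |\lambda_1|>0$. Suppose $\lambda_1>0$ and that for some $0<\gamma\le1$, $\lambda_1 - |\lambda_k|\ge\gamma\lambda_1$ for all $k>1$. Given $u_0\in L^2(\mathbb{R})$, define $u_{k+1} = \mathcal{T}u_k/\|\mathcal{T}u_k\|_{L^2(\mathbb{R})}$. If $|\langle v_1,u_0\rangle_{L^2}|\ge\eta>0$, then for every $k\ge1$, $$\big\|u_k - \mathrm{sign}(\langle v_1,u_0\rangle)v_1\big\|_{L^2}^2\le 2(1-\gamma)^{2k}\frac{\|u_0\|_{L^2}^2}{\eta^2}.$$ Moreover, if in addition $k\ge \frac{\log(\eta/4\|u_0\|_{L^2})}{\log(1-\gamma)}$, then $$\Big\|\sqrt{\langle u_k,\mathcal{T}u_k\rangle}\,u_k - \sqrt{\lambda_1}\,\mathrm{sign}(\langle v_1,u_0\rangle)v_1\Big\|_{L^2}^2\le 18\lambda_1(1-\gamma)^{2k}\frac{\|u_0\|_{L^2}^2}{\eta^2}.$$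
   Context: $v_kv_k^*$ denotes the rank-one operator $h\mapsto v_k\langle v_k,h\rangle$. *)

theory Defs
  imports "HOL-Analysis.Analysis"
begin

end

theory Submission imports Defs begin


lemma T_inner:
  fixes T :: "'a::{real_inner, complete_space} \<Rightarrow> 'a" and v :: "nat \<Rightarrow> 'a"
  assumes TE: "\<And>h. (\<lambda>k. (lam k * (v k \<bullet> h)) *\<^sub>R v k) sums T h"
  shows "(\<lambda>k. lam k * (v k \<bullet> h) * (v k \<bullet> g)) sums (T h \<bullet> g)"
  using bounded_linear.sums[OF bounded_linear_inner_left[of g] TE[of h]]
  by (simp add: inner_scaleR_left)

lemma T_inner_v:
  fixes T :: "'a::{real_inner, complete_space} \<Rightarrow> 'a" and v :: "nat \<Rightarrow> 'a"
  assumes ON: "\<And>i j. v i \<bullet> v j = (if i = j then 1 else 0)"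
  and TE: "\<And>h. (\<lambda>k. (lam k * (v k \<bullet> h)) *\<^sub>R v k) sums T h"
  shows "T h \<bullet> v j = lam j * (v j \<bullet> h)"
proof -
  have "(\<lambda>k. lam k * (v k \<bullet> h) * (v k \<bullet> v j)) = (\<lambda>k. if k = j then lam k * (v k \<bullet> h) else 0)"
    using ON by auto
  then have "(\<lambda>k. lam k * (v k \<bullet> h) * (v k \<bullet> v j)) sums (lam j * (v j \<bullet> h))"
    using sums_single[of j "\<lambda>k. lam k * (v k \<bullet> h)"] by simp
  then show ?thesis using T_inner[OF TE, of h "v j"] sums_unique2 by blast
qed

lemma T_add:
  fixes T :: "'a::{real_inner, complete_space} \<Rightarrow> 'a" and v :: "nat \<Rightarrow> 'a"
  assumes TE: "\<And>h. (\<lambda>k. (lam k * (v k \<bullet> h)) *\<^sub>R v k) sums T h"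
  shows "T (x + y) = T x + T y"
proof -
  have "(\<lambda>k. (lam k * (v k \<bullet> x)) *\<^sub>R v k + (lam k * (v k \<bullet> y)) *\<^sub>R v k) sums (T x + T y)"
    by (intro sums_add TE)
  moreover have "(\<lambda>k. (lam k * (v k \<bullet> x)) *\<^sub>R v k + (lam k * (v k \<bullet> y)) *\<^sub>R v k)
     = (\<lambda>k. (lam k * (v k \<bullet> (x + y))) *\<^sub>R v k)"
    by (simp add: inner_add_right algebra_simps scaleR_add_left)
  ultimately have "(\<lambda>k. (lam k * (v k \<bullet> (x + y))) *\<^sub>R v k) sums (T x + T y)" by simp
  then show ?thesis by (rule sums_unique2[OF TE])
qed

lemma T_scale:
  fixes T :: "'a::{real_inner, complete_space} \<Rightarrow> 'a" and v :: "nat \<Rightarrow> 'a"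
  assumes TE: "\<And>h. (\<lambda>k. (lam k * (v k \<bullet> h)) *\<^sub>R v k) sums T h"
  shows "T (c *\<^sub>R x) = c *\<^sub>R T x"
proof -
  have "(\<lambda>k. c *\<^sub>R ((lam k * (v k \<bullet> x)) *\<^sub>R v k)) sums (c *\<^sub>R T x)"
    by (intro sums_scaleR_right TE)
  moreover have "(\<lambda>k. c *\<^sub>R ((lam k * (v k \<bullet> x)) *\<^sub>R v k))
     = (\<lambda>k. (lam k * (v k \<bullet> (c *\<^sub>R x))) *\<^sub>R v k)"
    by (simp add: algebra_simps)
  ultimately have "(\<lambda>k. (lam k * (v k \<bullet> (c *\<^sub>R x))) *\<^sub>R v k) sums (c *\<^sub>R T x)" by simp
  then show ?thesis by (rule sums_unique2[OF TE])
qed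

lemma bessel_fin:
  fixes v :: "nat \<Rightarrow> 'a::real_inner"
  assumes ON: "\<And>i j. v i \<bullet> v j = (if i = j then 1 else 0)"
  shows "(\<Sum>k<n. (v k \<bullet> h)\<^sup>2) \<le> (norm h)\<^sup>2"
proof -
  define p where "p = (\<Sum>k<n. (v k \<bullet> h) *\<^sub>R v k)"
  have vp: "v j \<bullet> p = (if j < n then v j \<bullet> h else 0)" for j
  proof -
    have "v j \<bullet> p = (\<Sum>k<n. (v k \<bullet> h) * (v j \<bullet> v k))"
      unfolding p_def by (simp add: inner_sum_right)
    also have "\<dots> = (\<Sum>k<n. if k = j then v j \<bullet> h else 0)"
      using ON by (intro sum.cong) auto
    finally show ?thesis by simp
  qed
  have pp: "p \<bullet> p = (\<Sum>k<n. (v k \<bullet> h)\<^sup>2)"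
  proof -
    have "p \<bullet> p = (\<Sum>k<n. (v k \<bullet> h) * (v k \<bullet> p))"
      by (subst (1) p_def) (simp add: inner_sum_left)
    also have "\<dots> = (\<Sum>k<n. (v k \<bullet> h)\<^sup>2)"
      using vp by (intro sum.cong) (auto simp: power2_eq_square)
    finally show ?thesis .
  qed
  have hp: "h \<bullet> p = (\<Sum>k<n. (v k \<bullet> h)\<^sup>2)"
    unfolding p_def by (simp add: inner_sum_right power2_eq_square inner_commute)
  have "0 \<le> (h - p) \<bullet> (h - p)" by simp
  also have "\<dots> = h \<bullet> h - 2 * (h \<bullet> p) + p \<bullet> p"
    by (simp add: inner_diff_left inner_diff_right inner_commute)
  finally show ?thesis using pp hp by (simp add: power2_norm_eq_inner)
qed

lemma bessel:
  fixes v :: "nat \<Rightarrow> 'a::real_inner"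
  assumes ON: "\<And>i j. v i \<bullet> v j = (if i = j then 1 else 0)"
  shows "summable (\<lambda>k. (v k \<bullet> h)\<^sup>2)" "(\<Sum>k. (v k \<bullet> h)\<^sup>2) \<le> (norm h)\<^sup>2"
proof -
  show s: "summable (\<lambda>k. (v k \<bullet> h)\<^sup>2)"
    by (rule bounded_imp_summable[where B="(norm h)\<^sup>2"])
      (simp, metis bessel_fin[OF ON] lessThan_Suc_atMost)
  show "(\<Sum>k. (v k \<bullet> h)\<^sup>2) \<le> (norm h)\<^sup>2"
    by (rule suminf_le_const[OF s]) (auto intro: bessel_fin[OF ON])
qed

lemma T_perp_bounds:
  fixes T :: "'a::{real_inner, complete_space} \<Rightarrow> 'a" and v :: "nat \<Rightarrow> 'a"
  assumes ON: "\<And>i j. v i \<bullet> v j = (if i = j then 1 else 0)"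
  and TE: "\<And>h. (\<lambda>k. (lam k * (v k \<bullet> h)) *\<^sub>R v k) sums T h"
  and B: "B \<ge> 0" "\<And>k. k > 0 \<Longrightarrow> \<bar>lam k\<bar> \<le> B"
  and perp: "v 0 \<bullet> h = 0"
  shows "norm (T h) \<le> B * norm h" "\<bar>h \<bullet> T h\<bar> \<le> B * (norm h)\<^sup>2"
proof -
  define b where "b = (\<lambda>k. (v k \<bullet> h)\<^sup>2)"
  have bs: "summable b" and ble: "suminf b \<le> (norm h)\<^sup>2"
    using bessel[OF ON, of h] by (auto simp: b_def)
  have b0: "b k \<ge> 0" for k by (simp add: b_def)
  have lb: "\<bar>lam k\<bar> * b k \<le> B * b k" for k
  proof (cases "k = 0")
    case True then show ?thesis using perp by (simp add: b_def)
  next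
    case False then have "\<bar>lam k\<bar> \<le> B" using B(2) by simp
    then show ?thesis using b0[of k] by (rule mult_right_mono)
  qed
  have l2b: "(lam k)\<^sup>2 * b k \<le> B\<^sup>2 * b k" for k
  proof (cases "k = 0")
    case True then show ?thesis using perp by (simp add: b_def)
  next
    case False
    then have "\<bar>lam k\<bar> \<le> B" using B by simp
    then have "\<bar>lam k\<bar>\<^sup>2 \<le> B\<^sup>2" by (rule power_mono) simp
    then have "(lam k)\<^sup>2 \<le> B\<^sup>2" by simp
    then show ?thesis using b0[of k] by (rule mult_right_mono)
  qed
  have s1: "(\<lambda>k. (lam k)\<^sup>2 * b k) sums (T h \<bullet> T h)"
  proof -
    have "(\<lambda>k. lam k * (v k \<bullet> h) * (v k \<bullet> T h)) sums (T h \<bullet> T h)"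
      using T_inner[OF TE, of h "T h"] by (simp add: inner_commute)
    moreover have "(\<lambda>k. lam k * (v k \<bullet> h) * (v k \<bullet> T h)) = (\<lambda>k. (lam k)\<^sup>2 * b k)"
      using T_inner_v[OF ON TE, of h] by (auto simp: b_def inner_commute power2_eq_square)
    ultimately show ?thesis by simp
  qed
  have "T h \<bullet> T h \<le> (\<Sum>k. B\<^sup>2 * b k)"
    unfolding sums_unique[OF s1]
    by (rule suminf_le[OF l2b sums_summable[OF s1] summable_mult[OF bs, of "B\<^sup>2"]])
  also have "\<dots> = B\<^sup>2 * suminf b" using suminf_mult[OF bs] by simp
  also have "\<dots> \<le> B\<^sup>2 * (norm h)\<^sup>2" using ble by (simp add: mult_left_mono)
  finally have "(norm (T h))\<^sup>2 \<le> (B * norm h)\<^sup>2"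
    by (simp add: power2_norm_eq_inner power_mult_distrib)
  then show "norm (T h) \<le> B * norm h"
    by (rule power2_le_imp_le) (use B(1) in simp)
  have s2: "(\<lambda>k. lam k * b k) sums (h \<bullet> T h)"
    using T_inner[OF TE, of h h] by (simp add: b_def inner_commute power2_eq_square mult.assoc)
  have sa: "summable (\<lambda>k. \<bar>lam k * b k\<bar>)"
  proof (rule summable_comparison_test'[where N=0 and g="\<lambda>k. B * b k"])
    show "summable (\<lambda>k. B * b k)" by (rule summable_mult[OF bs])
    fix n :: nat
    have "\<bar>lam n * b n\<bar> = \<bar>lam n\<bar> * b n" using b0[of n] by (simp add: abs_mult)
    then show "norm \<bar>lam n * b n\<bar> \<le> B * b n" using lb[of n] by simp
  qed
  have "\<bar>h \<bullet> T h\<bar> \<le> (\<Sum>k. \<bar>lam k * b k\<bar>)"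
  proof -
    show ?thesis using summable_rabs[OF sa] sums_unique[OF s2] by simp
  qed
  also have "\<dots> \<le> (\<Sum>k. B * b k)"
  proof (rule suminf_le[OF _ sa summable_mult[OF bs, of B]])
    fix n :: nat
    have "\<bar>lam n * b n\<bar> = \<bar>lam n\<bar> * b n" using b0[of n] by (simp add: abs_mult)
    then show "\<bar>lam n * b n\<bar> \<le> B * b n" using lb[of n] by simp
  qed
  also have "\<dots> = B * suminf b" using suminf_mult[OF bs] by simp
  also have "\<dots> \<le> B * (norm h)\<^sup>2" using ble B by (simp add: mult_left_mono)
  finally show "\<bar>h \<bullet> T h\<bar> \<le> B * (norm h)\<^sup>2" .
qed


lemma pyth_dec:
  fixes v w :: "'a::real_inner"
  assumes "v \<bullet> v = 1" "v \<bullet> w = 0"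
  shows "(norm (a *\<^sub>R v + w))\<^sup>2 = a\<^sup>2 + (norm w)\<^sup>2"
proof -
  have "(norm (a *\<^sub>R v + w))\<^sup>2 = (a *\<^sub>R v + w) \<bullet> (a *\<^sub>R v + w)"
    by (simp add: power2_norm_eq_inner)
  also have "\<dots> = a\<^sup>2 + w \<bullet> w" using assms
    by (simp add: inner_add_left inner_add_right inner_commute power2_eq_square)
  finally show ?thesis by (simp add: power2_norm_eq_inner)
qed

lemma real_final:
  fixes l t a rho e q A B :: real
  assumes l: "l > 0" and t: "0 \<le> t" "t \<le> 1/4" and a1: "\<bar>a\<bar> \<le> 1"
    and ar: "a\<^sup>2 + rho\<^sup>2 = 1" and rt: "rho\<^sup>2 \<le> t\<^sup>2" and at: "1 - \<bar>a\<bar> \<le> t\<^sup>2"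
    and e: "\<bar>e\<bar> \<le> l * rho\<^sup>2" and q: "q = l * a\<^sup>2 + e"
    and A: "A = sqrt q" and B: "B = sqrt l"
  shows "q \<ge> 0" "q + l - 2 * A * B * \<bar>a\<bar> \<le> 18 * l * t\<^sup>2"
proof -
  have "t * t \<le> (1/4) * (1/4)" by (rule mult_mono) (use t in auto)
  then have t2: "t\<^sup>2 \<le> 1/16" by (simp add: power2_eq_square)
  have "a\<^sup>2 = 1 - rho\<^sup>2" using ar by linarith
  then have la: "l * a\<^sup>2 = l - l * rho\<^sup>2" by (simp add: right_diff_distrib)
  have e1: "e \<le> l * rho\<^sup>2" "- e \<le> l * rho\<^sup>2" using e by (auto simp: abs_le_iff)
  have lr0: "l * rho\<^sup>2 \<ge> 0" using l by simp
  have qle: "q \<le> l" using q la e1 lr0 by linarith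
  have "l * rho\<^sup>2 \<le> l * t\<^sup>2" using rt l by (simp add: mult_left_mono)
  moreover have "l * t\<^sup>2 \<le> l * (1/16)" using t2 l by (simp add: mult_left_mono)
  ultimately have lr: "l * rho\<^sup>2 \<le> l * t\<^sup>2" "l * rho\<^sup>2 \<le> l / 16" by auto
  show q0: "q \<ge> 0" using q la e1 lr l by linarith
  have AA: "A\<^sup>2 = q" "A \<ge> 0" using A q0 by auto
  have BB: "B\<^sup>2 = l" "B > 0" using B l by auto
  have AB: "A \<le> B" using A B qle by simp
  have "A * B \<le> B * B" using AB BB(2) by (simp add: mult_right_mono)
  then have ABl: "A * B \<le> l" using BB(1) by (simp add: power2_eq_square)
  have "(B - A) * B \<le> (B - A) * (B + A)" using AB AA(2) by (simp add: mult_left_mono)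
  also have "(B - A) * (B + A) = B\<^sup>2 - A\<^sup>2" by (simp add: power2_eq_square algebra_simps)
  also have "\<dots> = l - q" using AA BB by simp
  also have "\<dots> \<le> 2 * l * t\<^sup>2" using q la e1 lr by linarith
  also have "2 * l * t\<^sup>2 = (2 * B * t\<^sup>2) * B" using BB by (simp add: power2_eq_square)
  finally have BA: "B - A \<le> 2 * B * t\<^sup>2" using BB by (meson mult_right_le_imp_le)
  have "(B - A)\<^sup>2 \<le> (2 * B * t\<^sup>2)\<^sup>2" using BA AB by (intro power_mono) auto
  also have "\<dots> = 4 * l * (t\<^sup>2 * t\<^sup>2)" unfolding power_mult_distrib BB(1)
    by (simp add: power2_eq_square[of "t\<^sup>2"])
  also have "\<dots> \<le> 4 * l * (t\<^sup>2 * (1/16))"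
    by (intro mult_left_mono t2) (use l in auto)
  finally have BA2: "(B - A)\<^sup>2 \<le> l * t\<^sup>2 / 4" by simp
  have sq: "(B - A)\<^sup>2 = l + q - 2 * (A * B)" using AA BB by (simp add: power2_diff mult.commute)
  have "(A * B) * (1 - \<bar>a\<bar>) \<le> l * t\<^sup>2"
    by (rule mult_mono[OF ABl at]) (use l a1 in auto)
  then have "(B - A)\<^sup>2 + 2 * ((A * B) * (1 - \<bar>a\<bar>)) \<le> 18 * l * t\<^sup>2"
  proof -
    have "l * t\<^sup>2 \<ge> 0" using l by simp
    moreover have "18 * l * t\<^sup>2 = 18 * (l * t\<^sup>2)" by simp
    ultimately show ?thesis using BA2 \<open>(A * B) * (1 - \<bar>a\<bar>) \<le> l * t\<^sup>2\<close> by linarith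
  qed
  moreover have "q + l - 2 * A * B * \<bar>a\<bar> = (B - A)\<^sup>2 + 2 * ((A * B) * (1 - \<bar>a\<bar>))"
    unfolding sq by (simp add: algebra_simps)
  ultimately show "q + l - 2 * A * B * \<bar>a\<bar> \<le> 18 * l * t\<^sup>2" by simp
qed



lemma inner_expand:
  fixes x y :: "'a::real_inner"
  shows "(a *\<^sub>R x - c *\<^sub>R y) \<bullet> (a *\<^sub>R x - c *\<^sub>R y) = a * a * (x \<bullet> x) - 2 * a * c * (x \<bullet> y) + c * c * (y \<bullet> y)"
  by (simp add: inner_diff_left inner_diff_right inner_commute algebra_simps)

theorem mainTheorem8:
  fixes T :: "'a::{real_inner, complete_space} \<Rightarrow> 'a"
    and v :: "nat \<Rightarrow> 'a"
    and lam :: "nat \<Rightarrow> real"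
    and u :: "nat \<Rightarrow> 'a"
    and \<gamma> \<eta> :: real
  assumes orthonormal: "\<And>i j. v i \<bullet> v j = (if i = j then 1 else 0)"
    and basis: "closure (span (range v)) = UNIV"
    and hilbert_schmidt: "summable (\<lambda>k. (lam k)\<^sup>2)"
    and T_expansion: "\<And>h. (\<lambda>k. (lam k * (v k \<bullet> h)) *\<^sub>R v k) sums T h"
    and ordered: "\<And>k. \<bar>lam k\<bar> \<le> \<bar>lam 0\<bar>"
    and lam0_pos: "lam 0 > 0"
    and gamma_pos: "0 < \<gamma>" and gamma_le1: "\<gamma> \<le> 1"
    and gap: "\<And>k. k > 0 \<Longrightarrow> lam 0 - \<bar>lam k\<bar> \<ge> \<gamma> * lam 0"
    and iter: "\<And>k. u (Suc k) = (1 / norm (T (u k))) *\<^sub>R T (u k)"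
    and eta_pos: "\<eta> > 0"
    and overlap: "\<bar>v 0 \<bullet> u 0\<bar> \<ge> \<eta>"
  shows "(\<forall>k\<ge>1. (norm (u k - sgn (v 0 \<bullet> u 0) *\<^sub>R v 0))\<^sup>2
            \<le> 2 * (1 - \<gamma>) ^ (2 * k) * (norm (u 0))\<^sup>2 / \<eta>\<^sup>2)
       \<and> (\<forall>k\<ge>1. real k \<ge> ln (\<eta> / (4 * norm (u 0))) / ln (1 - \<gamma>) \<longrightarrow>
            (norm (sqrt (u k \<bullet> T (u k)) *\<^sub>R u k
                   - (sqrt (lam 0) * sgn (v 0 \<bullet> u 0)) *\<^sub>R v 0))\<^sup>2
            \<le> 18 * lam 0 * (1 - \<gamma>) ^ (2 * k) * (norm (u 0))\<^sup>2 / \<eta>\<^sup>2)"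
proof -
  note ON = orthonormal and TE = T_expansion
  have v00: "v 0 \<bullet> v 0 = 1" using ON by simp
  define \<alpha> where "\<alpha> = (\<lambda>k. v 0 \<bullet> u k)"
  define r where "r = (\<lambda>k. u k - \<alpha> k *\<^sub>R v 0)"
  define C where "C = norm (u 0) / \<eta>"
  define s where "s = sgn (v 0 \<bullet> u 0)"
  have rperp: "v 0 \<bullet> r k = 0" for k by (simp add: r_def \<alpha>_def inner_diff_right v00)
  have udec: "u k = \<alpha> k *\<^sub>R v 0 + r k" for k by (simp add: r_def)
  have pyth: "(norm (u k))\<^sup>2 = (\<alpha> k)\<^sup>2 + (norm (r k))\<^sup>2" for k
    using pyth_dec[OF v00 rperp[of k], of "\<alpha> k"] udec[of k] by simp
  have Tv0: "T (v 0) = lam 0 *\<^sub>R v 0"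
  proof -
    have "(\<lambda>k. (lam k * (v k \<bullet> v 0)) *\<^sub>R v k) = (\<lambda>k. if k = 0 then lam k *\<^sub>R v k else 0)"
      using ON by (auto simp: fun_eq_iff)
    then have "(\<lambda>k. (lam k * (v k \<bullet> v 0)) *\<^sub>R v k) sums (lam 0 *\<^sub>R v 0)"
      using sums_single[of 0 "\<lambda>k. lam k *\<^sub>R v k"] by simp
    then show ?thesis using TE[of "v 0"] sums_unique2 by blast
  qed
  have gapB: "\<And>k. k > 0 \<Longrightarrow> \<bar>lam k\<bar> \<le> (1 - \<gamma>) * lam 0" using gap by (simp add: algebra_simps)
  have B0: "0 \<le> (1 - \<gamma>) * lam 0" using gamma_le1 lam0_pos by simp
  have Tu: "T (u k) = (lam 0 * \<alpha> k) *\<^sub>R v 0 + T (r k)" for k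
    using udec[of k] T_add[OF TE] T_scale[OF TE] Tv0 by simp
  have Trperp: "v 0 \<bullet> T (r k) = 0" for k
    using T_inner_v[OF ON TE, of "r k" 0] rperp[of k] by (simp add: inner_commute)
  have Trn: "norm (T (r k)) \<le> (1 - \<gamma>) * lam 0 * norm (r k)" for k
    using T_perp_bounds(1)[OF ON TE B0 gapB rperp] by blast
  have Trq: "\<bar>r k \<bullet> T (r k)\<bar> \<le> (1 - \<gamma>) * lam 0 * (norm (r k))\<^sup>2" for k
    using T_perp_bounds(2)[OF ON TE B0 gapB rperp] by blast
  have NTu: "(norm (T (u k)))\<^sup>2 = (lam 0 * \<alpha> k)\<^sup>2 + (norm (T (r k)))\<^sup>2" for k
    using pyth_dec[OF v00 Trperp[of k], of "lam 0 * \<alpha> k"] Tu[of k] by simp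
  have \<alpha>suc: "\<alpha> (Suc k) = lam 0 * \<alpha> k / norm (T (u k))" for k
    by (simp add: \<alpha>_def iter Tu inner_add_right Trperp v00)
  have rsuc: "r (Suc k) = (1 / norm (T (u k))) *\<^sub>R T (r k)" for k
    unfolding r_def \<alpha>suc[of k] iter[of k] Tu[of k]
    by (simp add: algebra_simps)
  have Npos: "\<alpha> k \<noteq> 0 \<Longrightarrow> norm (T (u k)) > 0" for k
  proof -
    assume "\<alpha> k \<noteq> 0"
    then have "(lam 0 * \<alpha> k)\<^sup>2 > 0" using lam0_pos by simp
    then have "(norm (T (u k)))\<^sup>2 > 0" using NTu[of k] zero_le_power2[of "norm (T (r k))"] by linarith
    then show ?thesis by (metis norm_ge_zero order_le_less power_zero_numeral less_irrefl)
  qed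
  have inv: "\<alpha> k \<noteq> 0 \<and> sgn (\<alpha> k) = s \<and> norm (r k) \<le> (1 - \<gamma>) ^ k * C * \<bar>\<alpha> k\<bar>" for k
  proof (induction k)
    case 0
    have a0: "\<alpha> 0 \<noteq> 0" using overlap eta_pos by (auto simp: \<alpha>_def)
    have "(norm (r 0))\<^sup>2 \<le> (norm (u 0))\<^sup>2" using pyth[of 0] zero_le_power2[of "\<alpha> 0"] by linarith
    then have "norm (r 0) \<le> norm (u 0)" by (rule power2_le_imp_le) simp
    also have "norm (u 0) \<le> C * \<bar>\<alpha> 0\<bar>"
    proof -
      have "norm (u 0) * \<eta> \<le> norm (u 0) * \<bar>\<alpha> 0\<bar>" using overlap by (simp add: \<alpha>_def mult_left_mono)
      then show ?thesis using eta_pos by (simp add: C_def field_simps)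
    qed
    finally show ?case using a0 by (simp add: s_def \<alpha>_def)
  next
    case (Suc k)
    then have ak: "\<alpha> k \<noteq> 0" and sk: "sgn (\<alpha> k) = s"
      and rk: "norm (r k) \<le> (1 - \<gamma>) ^ k * C * \<bar>\<alpha> k\<bar>" by auto
    define N where "N = norm (T (u k))"
    have N: "N > 0" using Npos[OF ak] by (simp add: N_def)
    have as: "\<alpha> (Suc k) = lam 0 * \<alpha> k / N" using \<alpha>suc by (simp add: N_def)
    have a1: "\<alpha> (Suc k) \<noteq> 0" using as ak N lam0_pos by simp
    have s1: "sgn (\<alpha> (Suc k)) = s" using as sk N lam0_pos by (simp add: sgn_mult sgn_divide)
    have "norm (r (Suc k)) = norm (T (r k)) / N" using rsuc[of k] N by (simp add: N_def)
    also have "\<dots> \<le> (1 - \<gamma>) * lam 0 * norm (r k) / N" using Trn[of k] N by (simp add: divide_right_mono)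
    also have "\<dots> \<le> (1 - \<gamma>) * lam 0 * ((1 - \<gamma>) ^ k * C * \<bar>\<alpha> k\<bar>) / N"
      using rk B0 N by (intro divide_right_mono mult_left_mono) auto
    also have "\<dots> = (1 - \<gamma>) ^ Suc k * C * \<bar>\<alpha> (Suc k)\<bar>"
      using as N lam0_pos by (simp add: abs_mult abs_div)
    finally show ?case using a1 s1 by simp
  qed
  have nu1: "norm (u k) = 1" if k1: "k \<ge> 1" for k
  proof -
    obtain j where j: "k = Suc j" using k1 by (cases k) auto
    have "norm (T (u j)) > 0" using Npos inv by blast
    then show ?thesis using j iter[of j] by simp
  qed
  define t where "t = (\<lambda>k::nat. (1 - \<gamma>) ^ k * C)"
  have C0: "C \<ge> 0" using eta_pos by (simp add: C_def)
  have t0: "t k \<ge> 0" for k using C0 gamma_le1 by (simp add: t_def)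
  have t2: "(t k)\<^sup>2 = (1 - \<gamma>) ^ (2 * k) * (norm (u 0))\<^sup>2 / \<eta>\<^sup>2" for k
    by (simp add: t_def C_def power_mult_distrib power_divide power_mult mult.commute)
  have keys: "\<bar>\<alpha> k\<bar> \<le> 1 \<and> (\<alpha> k)\<^sup>2 + (norm (r k))\<^sup>2 = 1 \<and> (norm (r k))\<^sup>2 \<le> (t k)\<^sup>2
      \<and> 1 - \<bar>\<alpha> k\<bar> \<le> (t k)\<^sup>2" if "k \<ge> 1" for k
  proof -
    have e1: "(\<alpha> k)\<^sup>2 + (norm (r k))\<^sup>2 = 1" using pyth[of k] nu1[OF that] by simp
    then have "(\<alpha> k)\<^sup>2 \<le> 1" using zero_le_power2[of "norm (r k)"] by linarith
    then have "\<bar>\<alpha> k\<bar>\<^sup>2 \<le> 1\<^sup>2" by simp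
    then have a1: "\<bar>\<alpha> k\<bar> \<le> 1" by (rule power2_le_imp_le) simp
    have "norm (r k) \<le> t k * \<bar>\<alpha> k\<bar>" using inv[of k] by (simp add: t_def)
    also have "\<dots> \<le> t k" using a1 t0[of k] by (simp add: mult_left_le)
    finally have "norm (r k) \<le> t k" .
    then have r2: "(norm (r k))\<^sup>2 \<le> (t k)\<^sup>2" by (simp add: power_mono)
    have "(\<alpha> k)\<^sup>2 \<le> \<bar>\<alpha> k\<bar>" using a1
      by (metis abs_ge_zero mult_right_le_one_le power2_abs power2_eq_square)
    then show ?thesis using e1 r2 a1 by linarith
  qed
  have sa: "s * \<alpha> k = \<bar>\<alpha> k\<bar>" "s\<^sup>2 = 1" for k
    using inv[of k] by (auto simp: sgn_mult_self_eq abs_mult_sgn sgn_real_def power2_eq_square split: if_splits)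
  have part1: "(norm (u k - s *\<^sub>R v 0))\<^sup>2 \<le> 2 * (t k)\<^sup>2" if "k \<ge> 1" for k
  proof -
    have "u k - s *\<^sub>R v 0 = (\<alpha> k - s) *\<^sub>R v 0 + r k" using udec[of k] by (simp add: algebra_simps)
    then have "(norm (u k - s *\<^sub>R v 0))\<^sup>2 = (\<alpha> k - s)\<^sup>2 + (norm (r k))\<^sup>2"
      using pyth_dec[OF v00 rperp[of k]] by simp
    also have "\<dots> = 2 - 2 * \<bar>\<alpha> k\<bar>" using keys[OF that] sa(1)[of k] sa(2)
      by (simp add: power2_diff algebra_simps)
    finally show ?thesis using keys[OF that] by linarith
  qed
  show ?thesis
  proof (intro conjI allI impI)
    fix k :: nat assume k: "k \<ge> 1"
    show "(norm (u k - sgn (v 0 \<bullet> u 0) *\<^sub>R v 0))\<^sup>2 \<le> 2 * (1 - \<gamma>) ^ (2 * k) * (norm (u 0))\<^sup>2 / \<eta>\<^sup>2"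
      using part1[OF k] t2[of k] by (simp add: s_def)
  next
    fix k :: nat assume k: "k \<ge> 1"
      and lk: "ln (\<eta> / (4 * norm (u 0))) / ln (1 - \<gamma>) \<le> real k"
    have u0pos: "norm (u 0) > 0"
    proof -
      have "\<bar>v 0 \<bullet> u 0\<bar> \<le> norm (v 0) * norm (u 0)" by (rule Cauchy_Schwarz_ineq2)
      moreover have "norm (v 0) = 1" using v00 by (simp add: norm_eq_sqrt_inner)
      ultimately have "norm (u 0) \<ge> \<eta>" using overlap by simp
      then show ?thesis using eta_pos by linarith
    qed
    have tq: "t k \<le> 1/4"
    proof (cases "\<gamma> = 1")
      case True then show ?thesis using k by (simp add: t_def power_0_left)
    next
      case False
      then have g: "0 < 1 - \<gamma>" "1 - \<gamma> < 1" using gamma_le1 gamma_pos by auto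
      then have ln0: "ln (1 - \<gamma>) < 0" by simp
      have "real k * ln (1 - \<gamma>) \<le> ln (\<eta> / (4 * norm (u 0)))"
        using lk ln0 by (simp add: neg_divide_le_eq)
      then have "exp (real k * ln (1 - \<gamma>)) \<le> \<eta> / (4 * norm (u 0))"
        using eta_pos u0pos by (metis divide_pos_pos exp_le_cancel_iff exp_ln mult_pos_pos zero_less_numeral)
      then have "(1 - \<gamma>) ^ k \<le> \<eta> / (4 * norm (u 0))"
        using g by (simp add: exp_ln_iff exp_of_nat_mult ln_realpow[symmetric] powr_realpow)
      then have "(1 - \<gamma>) ^ k * C \<le> \<eta> / (4 * norm (u 0)) * C" by (rule mult_right_mono[OF _ C0])
      also have "\<dots> = 1/4" using eta_pos u0pos by (simp add: C_def)
      finally show ?thesis by (simp add: t_def)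
    qed
    define q where "q = u k \<bullet> T (u k)"
    have qe: "q = lam 0 * (\<alpha> k)\<^sup>2 + r k \<bullet> T (r k)"
      unfolding q_def Tu[of k] using udec[of k] rperp[of k] Trperp[of k] v00
      by (simp add: inner_add_left inner_add_right inner_commute power2_eq_square)
    have eb: "\<bar>r k \<bullet> T (r k)\<bar> \<le> lam 0 * (norm (r k))\<^sup>2"
    proof -
      have "(1 - \<gamma>) * lam 0 * (norm (r k))\<^sup>2 \<le> lam 0 * (norm (r k))\<^sup>2"
        by (rule mult_right_mono) (use gamma_pos lam0_pos in auto)
      then show ?thesis using Trq[of k] by linarith
    qed
    note K = keys[OF k]
    note RF = real_final[OF lam0_pos t0[of k] tq _ _ _ _ eb qe refl refl]
    have q0: "q \<ge> 0" using RF K by blast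
    have fin: "q + lam 0 - 2 * sqrt q * sqrt (lam 0) * \<bar>\<alpha> k\<bar> \<le> 18 * lam 0 * (t k)\<^sup>2"
      using RF K by blast
    have "(norm (sqrt q *\<^sub>R u k - (sqrt (lam 0) * s) *\<^sub>R v 0))\<^sup>2
        = (sqrt q *\<^sub>R u k - (sqrt (lam 0) * s) *\<^sub>R v 0) \<bullet> (sqrt q *\<^sub>R u k - (sqrt (lam 0) * s) *\<^sub>R v 0)"
      by (simp add: power2_norm_eq_inner)
    also have "\<dots> = (sqrt q * sqrt q) * (u k \<bullet> u k) - 2 * sqrt q * sqrt (lam 0) * (s * \<alpha> k) + (sqrt (lam 0) * sqrt (lam 0)) * (s * s) * (v 0 \<bullet> v 0)"
      using inner_expand[of "sqrt q" "u k" "sqrt (lam 0) * s" "v 0"] by (simp add: \<alpha>_def inner_commute algebra_simps)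
    also have "\<dots> = q + lam 0 - 2 * sqrt q * sqrt (lam 0) * \<bar>\<alpha> k\<bar>"
      using q0 lam0_pos nu1[OF k] v00 sa(1)[of k] sa(2)[unfolded power2_eq_square] by (simp add: power2_norm_eq_inner[symmetric])
    finally show "(norm (sqrt (u k \<bullet> T (u k)) *\<^sub>R u k - (sqrt (lam 0) * sgn (v 0 \<bullet> u 0)) *\<^sub>R v 0))\<^sup>2
        \<le> 18 * lam 0 * (1 - \<gamma>) ^ (2 * k) * (norm (u 0))\<^sup>2 / \<eta>\<^sup>2"
      using fin t2[of k] by (simp add: q_def s_def)
  qed
qed

end
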